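(* If $r\ge\sqrt{\frac{c\ln n}{n}}$ with a constant $c\ge 36$, then w.h.p. $G(n,r)$ is not plane.
   Context: The random geometric graph $G(n,r)$ is formed by choosing $n$ points independently and uniformly at random in the unit square $[0,1]^2$; two points are joined by a straight-line edge iff their Euclidean distance is at most $r$, where $r=r(n)$ is a function of $n$. Two line segments cross if they have a common point that is interior to both. A geometric graph is plane if no two of its edges cross. "W.h.p." means with probability tending to $1$ as $n\to\infty$. *)

theory Defs
  imports "HOL-Probability.Probability"
begin

type_synonym point = "real \<times> real"

definition unit_square :: "point set" where
  "unit_square = cbox (0,0) (1,1)"

definition unif_square :: "point measure" where
  "unif_square = uniform_measure lborel unit_square"

definition rgg_space :: "nat \<Rightarrow> (nat \<Rightarrow> point) measure" where
  "rgg_space n = (\<Pi>\<^sub>M i\<in>{..<n}. unif_square)"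

definition segments_cross :: "point \<Rightarrow> point \<Rightarrow> point \<Rightarrow> point \<Rightarrow> bool" where
  "segments_cross a b c d \<longleftrightarrow> open_segment a b \<inter> open_segment c d \<noteq> {}"

definition rgg_plane :: "nat \<Rightarrow> real \<Rightarrow> (nat \<Rightarrow> point) \<Rightarrow> bool" where
  "rgg_plane n r x \<longleftrightarrow>
     (\<forall>i<n. \<forall>j<n. \<forall>k<n. \<forall>l<n.
        i \<noteq> j \<and> k \<noteq> l \<and> {i, j} \<noteq> {k, l} \<and>
        dist (x i) (x j) \<le> r \<and> dist (x k) (x l) \<le> r
        \<longrightarrow> \<not> segments_cross (x i) (x j) (x k) (x l))"

end

theory Submission
  imports Defs
begin


lemma sq_meas: "emeasure lborel unit_square = 1"
  unfolding unit_square_def by (simp add: emeasure_lborel_cbox_eq Basis_prod_def)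

lemma unif_prob: "prob_space unif_square"
  unfolding unif_square_def by (rule prob_space_uniform_measure) (simp_all add: sq_meas)

lemma sets_unif[simp]: "sets unif_square = sets borel"
  unfolding unif_square_def by simp

lemma space_unif[simp]: "space unif_square = UNIV"
  unfolding unif_square_def by simp

lemma box_meas:
  fixes x0 y0 w :: real
  assumes "0 \<le> w" "cbox (x0,y0) (x0+w,y0+w) \<subseteq> unit_square"
  shows "emeasure unif_square (- cbox (x0,y0) (x0+w,y0+w)) = ennreal (1 - w^2)"
proof -
  interpret prob_space unif_square by (rule unif_prob)
  have m: "emeasure unif_square (cbox (x0,y0) (x0+w,y0+w)) = ennreal (w^2)"
    unfolding unif_square_def using assms
    apply (subst emeasure_uniform_measure)
    apply (simp_all add: unit_square_def)
    using assms by (simp add: sq_meas[unfolded unit_square_def] Int_absorb1 unit_square_def emeasure_lborel_cbox_eq Basis_prod_def power2_eq_square divide_ennreal_def)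
  have "emeasure unif_square (- cbox (x0,y0) (x0+w,y0+w)) = emeasure unif_square (space unif_square - cbox (x0,y0) (x0+w,y0+w))"
    by (simp add: Compl_eq_Diff_UNIV)
  also have "\<dots> = 1 - ennreal (w^2)" by (subst emeasure_compl) (simp_all add: m emeasure_space_1[simplified])
  also have "\<dots> = ennreal (1 - w^2)" by (simp add: ennreal_1[symmetric] ennreal_minus del: ennreal_1)
  finally show ?thesis .
qed

definition KK :: "nat \<Rightarrow> ((point \<times> point \<times> point \<times> point) \<times> real \<times> real) set" where
  "KK m = {((a,b,c,d),(t,s)). norm (a,b,c,d) \<le> real m \<and> 1/real (Suc m) \<le> dist a b \<and> 1/real (Suc m) \<le> dist c d
     \<and> 1/real (Suc m) \<le> t \<and> t \<le> 1 - 1/real (Suc m) \<and> 1/real (Suc m) \<le> s \<and> s \<le> 1 - 1/real (Suc m)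
     \<and> (1-t) *\<^sub>R a + t *\<^sub>R b = (1-s) *\<^sub>R c + s *\<^sub>R d}"

lemma aux_t: fixes t::real and m::nat assumes "1 \<le> t + t*real m" "t + t*real m \<le> real m" shows "\<bar>t\<bar> \<le> 1"
proof -
  have h: "t*(1+real m) \<ge> 1" "t*(1+real m) \<le> real m" using assms by (simp_all add: algebra_simps)
  have "t > 0"
  proof (rule ccontr)
    assume "\<not> t>0" then have "t*(1+real m) \<le> 0" by (simp add: mult_nonpos_nonneg)
    then show False using h by simp
  qed
  moreover have "t \<le> 1"
  proof (rule ccontr)
    assume "\<not> t \<le> 1" then have "t > 1" by simp
    then have f: "1 + real m < t*(1+real m)" using mult_strict_right_mono[of 1 t "1+real m"] by simp
    show False using f h(2) by linarith
  qed
  ultimately show ?thesis by simp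
qed

lemma KK_compact: "compact (KK m)"
proof (unfold compact_eq_bounded_closed, intro conjI)
  show "bounded (KK m)"
  proof -
    have "KK m \<subseteq> cball 0 (real m + 2)"
    proof
      fix z assume z: "z \<in> KK m"
      obtain a b c d t s where zz: "z = ((a,b,c,d),(t,s))" by (metis prod.exhaust)
      have t: "\<bar>t\<bar> \<le> 1" "\<bar>s\<bar> \<le> 1" using z zz unfolding KK_def
        by (auto simp: field_simps intro: aux_t)
      have "norm z \<le> norm (a,b,c,d) + norm (t,s)" unfolding zz by (rule norm_Pair_le)
      also have "norm (t,s) \<le> norm t + norm s" by (rule norm_Pair_le)
      finally show "z \<in> cball 0 (real m + 2)" using z zz t unfolding KK_def by auto
    qed
    then show ?thesis using bounded_cball bounded_subset by blast
  qed
  show "closed (KK m)"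
    unfolding KK_def case_prod_unfold
    by (intro closed_Collect_conj closed_Collect_le closed_Collect_eq continuous_intros)
qed

lemma SC_eq: "{p :: point \<times> point \<times> point \<times> point. case p of (a,b,c,d) \<Rightarrow> segments_cross a b c d} = (\<Union>m. fst ` KK m)"
proof (intro equalityI subsetI)
  fix p :: "point \<times> point \<times> point \<times> point"
  assume "p \<in> {p. case p of (a,b,c,d) \<Rightarrow> segments_cross a b c d}"
  then obtain a b c d where p: "p = (a,b,c,d)" and sc: "segments_cross a b c d" by auto
  then obtain z where z1: "z \<in> open_segment a b" and z2: "z \<in> open_segment c d"
    unfolding segments_cross_def by auto
  obtain t where t: "a \<noteq> b" "0 < t" "t < 1" "z = (1 - t) *\<^sub>R a + t *\<^sub>R b" using z1 in_segment(2) by metis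
  obtain s where s: "c \<noteq> d" "0 < s" "s < 1" "z = (1 - s) *\<^sub>R c + s *\<^sub>R d" using z2 in_segment(2) by metis
  define e where "e = Min {dist a b, dist c d, t, 1 - t, s, 1 - s}"
  have e: "0 < e" "e \<le> dist a b" "e \<le> dist c d" "e \<le> t" "e \<le> 1 - t" "e \<le> s" "e \<le> 1 - s"
    unfolding e_def using t s by auto
  obtain m1 :: nat where m1: "1 / real (Suc m1) < e" using e(1) nat_approx_posE by blast
  obtain m2 :: nat where m2: "norm (a,b,c,d) \<le> real m2" using real_arch_simple by blast
  define m where "m = max m1 m2"
  have "1 / real (Suc m) \<le> 1 / real (Suc m1)" unfolding m_def
    by (intro divide_left_mono) auto
  then have em: "1 / real (Suc m) \<le> e" using m1 by linarith
  have "norm (a,b,c,d) \<le> real m" using m2 unfolding m_def by linarith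
  then have "((a,b,c,d),(t,s)) \<in> KK m" unfolding KK_def using e em t s by auto
  then show "p \<in> (\<Union>m. fst ` KK m)" unfolding p by force
next
  fix p assume "p \<in> (\<Union>m. fst ` KK m)"
  then obtain m t s where pk: "(p,(t,s)) \<in> KK m" by force
  obtain a b c d where p: "p = (a,b,c,d)" by (metis prod.exhaust)
  have pos: "0 < 1 / real (Suc m)" by simp
  have h: "1/real (Suc m) \<le> dist a b" "1/real (Suc m) \<le> dist c d" "1/real (Suc m) \<le> t" "t \<le> 1 - 1/real (Suc m)"
    "1/real (Suc m) \<le> s" "s \<le> 1 - 1/real (Suc m)" "(1-t) *\<^sub>R a + t *\<^sub>R b = (1-s) *\<^sub>R c + s *\<^sub>R d"
    using pk unfolding p KK_def by auto
  have ne: "a \<noteq> b" "c \<noteq> d" using h(1,2) pos by auto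
  have ts: "0 < t" "t < 1" "0 < s" "s < 1" using h(3-6) pos by linarith+
  have "(1-t) *\<^sub>R a + t *\<^sub>R b \<in> open_segment a b"
    unfolding in_segment(2) using ne ts by blast
  moreover have "(1-t) *\<^sub>R a + t *\<^sub>R b \<in> open_segment c d"
    unfolding in_segment(2) h(7) using ne ts by blast
  ultimately show "p \<in> {p. case p of (a,b,c,d) \<Rightarrow> segments_cross a b c d}"
    unfolding p segments_cross_def by auto
qed

lemma SC_borel: "{p :: point \<times> point \<times> point \<times> point. case p of (a,b,c,d) \<Rightarrow> segments_cross a b c d} \<in> sets borel"
proof -
  have "\<And>m. closed (fst ` KK m)"
    by (intro compact_imp_closed compact_continuous_image continuous_intros KK_compact)
  then show ?thesis unfolding SC_eq by (intro sets.countable_UN) auto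
qed


lemma SC_pred: "Measurable.pred borel (\<lambda>p::point\<times>point\<times>point\<times>point. case p of (a,b,c,d) \<Rightarrow> segments_cross a b c d)"
  unfolding pred_def using SC_borel by (simp add: vimage_def Collect_conj_eq)

lemma seg_meas[measurable (raw)]:
  assumes [measurable]: "f \<in> borel_measurable M" "g \<in> borel_measurable M" "h \<in> borel_measurable M" "k \<in> borel_measurable M"
  shows "Measurable.pred M (\<lambda>x. segments_cross (f x) (g x) (h x) (k x))"
proof -
  have "(\<lambda>x. (f x, g x, h x, k x)) \<in> borel_measurable M"
    by measurable
  from measurable_compose[OF this SC_pred] show ?thesis by simp
qed


lemma comp_meas: "i < n \<Longrightarrow> (\<lambda>x. x i) \<in> borel_measurable (rgg_space n)"
proof -
  assume "i < n"
  then have "(\<lambda>x. x i) \<in> rgg_space n \<rightarrow>\<^sub>M unif_square"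
    unfolding rgg_space_def by (intro measurable_component_singleton) auto
  then show ?thesis using measurable_cong_sets[OF refl sets_unif, of "rgg_space n"] by simp
qed

lemma nonplane_meas: "{x \<in> space (rgg_space n). \<not> rgg_plane n r x} \<in> sets (rgg_space n)"
proof -
  have eq: "{x \<in> space (rgg_space n). \<not> rgg_plane n r x} =
    (\<Union>i\<in>{..<n}. \<Union>j\<in>{..<n}. \<Union>k\<in>{..<n}. \<Union>l\<in>{..<n}.
      {x \<in> space (rgg_space n). i \<noteq> j \<and> k \<noteq> l \<and> {i, j} \<noteq> {k, l} \<and>
        dist (x i) (x j) \<le> r \<and> dist (x k) (x l) \<le> r \<and> segments_cross (x i) (x j) (x k) (x l)})"
    unfolding rgg_plane_def by blast
  show ?thesis unfolding eq
  proof (intro sets.finite_UN finite_lessThan ballI)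
    fix i j k l assume "i \<in> {..<n}" "j \<in> {..<n}" "k \<in> {..<n}" "l \<in> {..<n}"
    then have [measurable]: "(\<lambda>x. x i) \<in> borel_measurable (rgg_space n)" "(\<lambda>x. x j) \<in> borel_measurable (rgg_space n)"
      "(\<lambda>x. x k) \<in> borel_measurable (rgg_space n)" "(\<lambda>x. x l) \<in> borel_measurable (rgg_space n)"
      by (auto intro: comp_meas)
    show "{x \<in> space (rgg_space n). i \<noteq> j \<and> k \<noteq> l \<and> {i, j} \<noteq> {k, l} \<and>
        dist (x i) (x j) \<le> r \<and> dist (x k) (x l) \<le> r \<and> segments_cross (x i) (x j) (x k) (x l)} \<in> sets (rgg_space n)"
      by measurable
  qed
qed

lemma empty_prob:
  assumes S: "S \<in> sets borel" and q: "emeasure unif_square (-S) = ennreal q" "0 \<le> q"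
  shows "measure (rgg_space n) {x \<in> space (rgg_space n). \<forall>i<n. x i \<notin> S} = q^n"
proof -
  interpret U: prob_space unif_square by (rule unif_prob)
  interpret P: product_prob_space "\<lambda>_::nat. unif_square" "{..<n}"
    by (simp add: product_prob_space_def product_sigma_finite_def U.sigma_finite_measure_axioms
        product_prob_space_axioms_def U.prob_space_axioms)
  have eq: "{x \<in> space (rgg_space n). \<forall>i<n. x i \<notin> S} = (\<Pi>\<^sub>E i\<in>{..<n}. - S)"
    unfolding rgg_space_def space_PiM by (auto simp: PiE_iff extensional_def)
  have "emeasure (rgg_space n) {x \<in> space (rgg_space n). \<forall>i<n. x i \<notin> S} = (\<Prod>i\<in>{..<n}. emeasure unif_square (-S))"
    unfolding eq unfolding rgg_space_def using S by (intro P.emeasure_PiM) (auto simp: sets.compl_sets)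
  also have "\<dots> = ennreal (q^n)" using q by (simp add: ennreal_power)
  finally show ?thesis using q by (simp add: measure_def)
qed


lemma prod_lb: fixes X Y p q :: real assumes "0 \<le> p" "p \<le> X" "0 \<le> q" "q \<le> Y" shows "p*q \<le> X*Y"
  using assms by (intro mult_mono) auto

lemma prod_abs: fixes x y P Q :: real assumes "\<bar>x\<bar> \<le> P" "\<bar>y\<bar> \<le> Q" shows "x*y \<le> P*Q"
proof -
  have "\<bar>x*y\<bar> \<le> P*Q" unfolding abs_mult using assms by (intro mult_mono) auto
  then show ?thesis by simp
qed

lemma pos_cross: fixes X Y x y h :: real
  assumes "h > 0" "4/5*h \<le> X" "4/5*h \<le> Y" "-(6/5*h) \<le> x" "x \<le> 6/5*h" "-(1/5*h) \<le> y" "y \<le> 1/5*h"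
  shows "X*Y - x*y > 0"
proof -
  have "(4/5*h)*(4/5*h) \<le> X*Y" using assms by (intro prod_lb) auto
  moreover have "x*y \<le> (6/5*h)*(1/5*h)" using assms by (intro prod_abs) (auto simp: abs_le_iff)
  moreover have "(6/5*h)*(1/5*h) < (4/5*h)*(4/5*h)" using assms by (simp add: algebra_simps)
  ultimately show ?thesis by linarith
qed

lemma cross_lemma:
  fixes a1 a2 b1 b2 c1 c2 d1 d2 cx cy h :: real
  assumes h: "h > 0"
    and a: "cx - 11/10*h \<le> a1" "a1 \<le> cx - 9/10*h" "cy - h/10 \<le> a2" "a2 \<le> cy + h/10"
    and b: "cx + 9/10*h \<le> b1" "b1 \<le> cx + 11/10*h" "cy - h/10 \<le> b2" "b2 \<le> cy + h/10"
    and c: "cx - h/10 \<le> c1" "c1 \<le> cx + h/10" "cy - 11/10*h \<le> c2" "c2 \<le> cy - 9/10*h"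
    and d: "cx - h/10 \<le> d1" "d1 \<le> cx + h/10" "cy + 9/10*h \<le> d2" "d2 \<le> cy + 11/10*h"
  shows "segments_cross (a1,a2) (b1,b2) (c1,c2) (d1,d2)"
proof -
  define u1 where "u1 = b1 - a1"
  define u2 where "u2 = b2 - a2"
  define v1 where "v1 = d1 - c1"
  define v2 where "v2 = d2 - c2"
  define w1 where "w1 = c1 - a1"
  define w2 where "w2 = c2 - a2"
  define D where "D = u1 * v2 - u2 * v1"
  define T where "T = w1 * v2 - w2 * v1"
  define S where "S = w1*u2 - w2*u1"
  have D: "D > 0" unfolding D_def
    using a b c d unfolding u1_def u2_def v1_def v2_def by (intro pos_cross[OF h]) linarith+
  have T: "T > 0" unfolding T_def
    using a b c d unfolding w1_def w2_def v1_def v2_def by (intro pos_cross[OF h]) linarith+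
  have DT: "D - T > 0"
  proof -
    have "D - T = (b1 - c1)* v2 - (b2 - c2)* v1" unfolding D_def T_def u1_def u2_def w1_def w2_def
      by (simp add: algebra_simps)
    also have "\<dots> > 0"
      using a b c d unfolding v1_def v2_def by (intro pos_cross[OF h]) linarith+
    finally show ?thesis .
  qed
  have S: "S > 0"
  proof -
    have "S = u1 * (-w2) - w1 * (-u2)" unfolding S_def by (simp add: algebra_simps)
    also have "\<dots> > 0"
      using a b c d unfolding u1_def u2_def w1_def w2_def by (intro pos_cross[OF h]) linarith+
    finally show ?thesis .
  qed
  have DS: "D - S > 0"
  proof -
    have "D - S = u1*(d2 - a2) - (d1 - a1)*u2" unfolding D_def S_def u1_def u2_def v1_def v2_def w1_def w2_def
      by (simp add: algebra_simps)
    also have "\<dots> > 0"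
      using a b c d unfolding u1_def u2_def by (intro pos_cross[OF h]) linarith+
    finally show ?thesis .
  qed
  define t where "t = T / D"
  define s where "s = S / D"
  have t: "0 < t" "t < 1" using D T DT unfolding t_def by (auto simp: field_simps)
  have s: "0 < s" "s < 1" using D S DS unfolding s_def by (auto simp: field_simps)
  have ab: "(a1,a2) \<noteq> (b1,b2)" using a b h by auto
  have cd: "(c1,c2) \<noteq> (d1,d2)" using c d h by auto
  have e1: "T*u1 - S* v1 = D*w1" unfolding D_def T_def S_def by (simp add: algebra_simps)
  have e2: "T*u2 - S* v2 = D*w2" unfolding D_def T_def S_def by (simp add: algebra_simps)
  have eq: "(1 - t) *\<^sub>R (a1,a2) + t *\<^sub>R (b1,b2) = (1 - s) *\<^sub>R (c1,c2) + s *\<^sub>R (d1,d2)"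
  proof -
    have "a1 + t*u1 = c1 + s* v1"
    proof -
      have "t*u1 - s* v1 = (T*u1 - S* v1)/D" unfolding t_def s_def using D by (simp add: field_simps)
      also have "\<dots> = w1" using e1 D by simp
      finally show ?thesis unfolding w1_def by simp
    qed
    moreover have "a2 + t*u2 = c2 + s* v2"
    proof -
      have "t*u2 - s* v2 = (T*u2 - S* v2)/D" unfolding t_def s_def using D by (simp add: field_simps)
      also have "\<dots> = w2" using e2 D by simp
      finally show ?thesis unfolding w2_def by simp
    qed
    ultimately show ?thesis unfolding u1_def u2_def v1_def v2_def by (simp add: algebra_simps)
  qed
  have "(1 - t) *\<^sub>R (a1,a2) + t *\<^sub>R (b1,b2) \<in> open_segment (a1,a2) (b1,b2)"
    unfolding in_segment(2) using ab t by blast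
  moreover have "(1 - t) *\<^sub>R (a1,a2) + t *\<^sub>R (b1,b2) \<in> open_segment (c1,c2) (d1,d2)"
    unfolding in_segment(2) eq using cd s by blast
  ultimately show ?thesis unfolding segments_cross_def by blast
qed


definition bx :: "real \<Rightarrow> real \<Rightarrow> real \<Rightarrow> point set" where
  "bx h x0 y0 = cbox (x0,y0) (x0 + h/5, y0 + h/5)"

lemma mem_bx: "p \<in> bx h x0 y0 \<longleftrightarrow> x0 \<le> fst p \<and> fst p \<le> x0 + h/5 \<and> y0 \<le> snd p \<and> snd p \<le> y0 + h/5"
  by (cases p) (auto simp: bx_def cbox_Pair_eq)

lemma dist_bound:
  fixes a1 a2 b1 b2 h :: real
  assumes "h > 0" "\<bar>a1 - b1\<bar> \<le> 11/5*h" "\<bar>a2 - b2\<bar> \<le> 1/5*h"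
  shows "dist (a1,a2) (b1,b2) \<le> 3*h"
proof -
  have "(a1-b1)^2 \<le> (11/5*h)^2" using assms abs_le_square_iff[of "a1-b1" "11/5*h"] by simp
  moreover have "(a2-b2)^2 \<le> (1/5*h)^2" using assms abs_le_square_iff[of "a2-b2" "1/5*h"] by simp
  moreover have "(11/5*h)^2 + (1/5*h)^2 = 122/25 * h^2" "(3*h)^2 = 9 * h^2" by (simp_all add: power2_eq_square field_simps)
  moreover have "h^2 \<ge> 0" by simp
  ultimately have "(a1-b1)^2 + (a2-b2)^2 \<le> (3*h)^2" by linarith
  then have "sqrt ((a1-b1)^2 + (a2-b2)^2) \<le> sqrt ((3*h)^2)" by (rule real_sqrt_le_mono)
  moreover have "sqrt ((3*h)^2) = 3*h" using assms by (simp only: real_sqrt_abs)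
  moreover have "dist (a1,a2) (b1,b2) = sqrt ((a1-b1)^2 + (a2-b2)^2)" by (simp add: dist_Pair_Pair dist_real_def)
  ultimately show ?thesis by linarith
qed

lemma dist_bound2:
  fixes a1 a2 b1 b2 h :: real
  assumes "h > 0" "\<bar>a1 - b1\<bar> \<le> 1/5*h" "\<bar>a2 - b2\<bar> \<le> 11/5*h"
  shows "dist (a1,a2) (b1,b2) \<le> 3*h"
proof -
  have "dist (a1,a2) (b1,b2) = dist (a2,a1) (b2,b1)" by (simp add: dist_Pair_Pair add.commute)
  then show ?thesis using dist_bound[OF assms(1,3,2)] by simp
qed

lemma hit_nonplane:
  fixes h r :: real
  assumes h: "h > 0" "3*h \<le> r" and idx: "i < n" "j < n" "k < n" "l < n"
    and A: "x i \<in> bx h (1/2 - 11/10*h) (1/2 - h/10)"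
    and B: "x j \<in> bx h (1/2 + 9/10*h) (1/2 - h/10)"
    and C: "x k \<in> bx h (1/2 - h/10) (1/2 - 11/10*h)"
    and D: "x l \<in> bx h (1/2 - h/10) (1/2 + 9/10*h)"
  shows "\<not> rgg_plane n r x"
proof -
  obtain a1 a2 where a: "x i = (a1,a2)" by (metis prod.exhaust)
  obtain b1 b2 where b: "x j = (b1,b2)" by (metis prod.exhaust)
  obtain c1 c2 where c: "x k = (c1,c2)" by (metis prod.exhaust)
  obtain d1 d2 where d: "x l = (d1,d2)" by (metis prod.exhaust)
  note A' = A[unfolded a mem_bx fst_conv snd_conv]
  note B' = B[unfolded b mem_bx fst_conv snd_conv]
  note C' = C[unfolded c mem_bx fst_conv snd_conv]
  note D' = D[unfolded d mem_bx fst_conv snd_conv]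
  have sc: "segments_cross (a1,a2) (b1,b2) (c1,c2) (d1,d2)"
    by (rule cross_lemma[OF h(1), of "1/2" a1 "1/2"]) (use A' B' C' D' in linarith)+
  have lt: "a1 < b1" "c2 < d2" "a1 < c1" "c1 < b1" using A' B' C' D' h by linarith+
  have ne: "i \<noteq> j" "k \<noteq> l" "k \<noteq> i" "k \<noteq> j"
    using lt a b c d by (metis fst_conv snd_conv less_irrefl)+
  have "\<bar>a1 - b1\<bar> \<le> 11/5*h" "\<bar>a2 - b2\<bar> \<le> 1/5*h" unfolding abs_le_iff using A' B' by linarith+
  then have d1: "dist (a1,a2) (b1,b2) \<le> r"
    using dist_bound[OF h(1), of a1 b1 a2 b2] h by linarith
  have "\<bar>c1 - d1\<bar> \<le> 1/5*h" "\<bar>c2 - d2\<bar> \<le> 11/5*h" unfolding abs_le_iff using C' D' by linarith+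
  then have d2: "dist (c1,c2) (d1,d2) \<le> r"
    using dist_bound2[OF h(1), of c1 d1 c2 d2] h by linarith
  have "{i,j} \<noteq> {k,l}" using ne by auto
  then show ?thesis
  proof (intro notI)
    assume ij: "{i,j} \<noteq> {k,l}" and P: "rgg_plane n r x"
    have "\<not> segments_cross (x i) (x j) (x k) (x l)"
      using P[unfolded rgg_plane_def, rule_format, OF idx] ne(1,2) ij d1 d2 a b c d by simp
    then show False using sc a b c d by simp
  qed
qed

lemma rgg_prob: "prob_space (rgg_space n)"
  unfolding rgg_space_def by (intro prob_space_PiM unif_prob)

lemma E_sets: assumes "S \<in> sets borel"
  shows "{x \<in> space (rgg_space n). \<forall>i<n. x i \<notin> S} \<in> sets (rgg_space n)"
proof -
  have eq: "{x \<in> space (rgg_space n). \<forall>i<n. x i \<notin> S} = (\<Pi>\<^sub>E i\<in>{..<n}. - S)"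
    unfolding rgg_space_def space_PiM by (auto simp: PiE_iff extensional_def)
  show ?thesis unfolding eq unfolding rgg_space_def using assms
    by (intro sets_PiM_I_finite) (auto simp: sets.compl_sets)
qed

lemma bx_sets: "bx h x0 y0 \<in> sets borel"
  unfolding bx_def by (simp add: borel_closed)

lemma bx_sub: assumes "0 \<le> x0" "x0 + h/5 \<le> 1" "0 \<le> y0" "y0 + h/5 \<le> 1"
  shows "cbox (x0,y0) (x0 + h/5, y0 + h/5) \<subseteq> unit_square"
proof
  fix p assume "p \<in> cbox (x0,y0) (x0 + h/5, y0 + h/5)"
  then have "p \<in> bx h x0 y0" by (simp add: bx_def)
  then show "p \<in> unit_square" unfolding mem_bx unit_square_def using assms
    by (cases p) (auto simp: cbox_Pair_eq)
qed

lemma bx_prob: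
  assumes "0 < h" "0 \<le> x0" "x0 + h/5 \<le> 1" "0 \<le> y0" "y0 + h/5 \<le> 1"
  shows "measure (rgg_space n) {x \<in> space (rgg_space n). \<forall>i<n. x i \<notin> bx h x0 y0} = (1 - (h/5)^2)^n"
proof (rule empty_prob[OF bx_sets])
  show "emeasure unif_square (- bx h x0 y0) = ennreal (1 - (h/5)^2)"
    unfolding bx_def using assms by (intro box_meas bx_sub) auto
  have "h/5 \<le> 1" using assms by linarith
  then have "(h/5)^2 \<le> 1" using assms by (simp add: power_le_one)
  then show "0 \<le> 1 - (h/5)^2" by simp
qed

lemma prob_bound:
  fixes h r :: real
  assumes h: "0 < h" "h \<le> 1/3" "3*h \<le> r"
  shows "1 - 4 * (1 - (h/5)^2)^n \<le> measure (rgg_space n) {x \<in> space (rgg_space n). \<not> rgg_plane n r x}"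
proof -
  interpret P: prob_space "rgg_space n" by (rule rgg_prob)
  define E where "E X = {x \<in> space (rgg_space n). \<forall>i<n. x i \<notin> X}" for X
  define BA where "BA = bx h (1/2 - 11/10*h) (1/2 - h/10)"
  define BB where "BB = bx h (1/2 + 9/10*h) (1/2 - h/10)"
  define BC where "BC = bx h (1/2 - h/10) (1/2 - 11/10*h)"
  define BD where "BD = bx h (1/2 - h/10) (1/2 + 9/10*h)"
  define q where "q = (1 - (h/5)^2)^n"
  have Es: "E X \<in> sets (rgg_space n)" if "X \<in> sets borel" for X
    unfolding E_def using that by (rule E_sets)
  have pA: "measure (rgg_space n) (E BA) = q" unfolding E_def BA_def q_def
    using h by (intro bx_prob) auto
  have pB: "measure (rgg_space n) (E BB) = q" unfolding E_def BB_def q_def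
    using h by (intro bx_prob) auto
  have pC: "measure (rgg_space n) (E BC) = q" unfolding E_def BC_def q_def
    using h by (intro bx_prob) auto
  have pD: "measure (rgg_space n) (E BD) = q" unfolding E_def BD_def q_def
    using h by (intro bx_prob) auto
  have sA: "E BA \<in> sets (rgg_space n)" "E BB \<in> sets (rgg_space n)" "E BC \<in> sets (rgg_space n)" "E BD \<in> sets (rgg_space n)"
    unfolding BA_def BB_def BC_def BD_def by (intro Es bx_sets)+
  define U where "U = E BA \<union> E BB \<union> E BC \<union> E BD"
  have sU: "U \<in> sets (rgg_space n)" unfolding U_def using sA by auto
  have "measure (rgg_space n) U \<le> measure (rgg_space n) (E BA \<union> E BB \<union> E BC) + measure (rgg_space n) (E BD)"
    unfolding U_def using sA by (intro measure_Un_le) auto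
  also have "measure (rgg_space n) (E BA \<union> E BB \<union> E BC) \<le> measure (rgg_space n) (E BA \<union> E BB) + measure (rgg_space n) (E BC)"
    using sA by (intro measure_Un_le) auto
  also have "measure (rgg_space n) (E BA \<union> E BB) \<le> measure (rgg_space n) (E BA) + measure (rgg_space n) (E BB)"
    using sA by (intro measure_Un_le) auto
  finally have mU: "measure (rgg_space n) U \<le> 4 * q" using pA pB pC pD by simp
  have sub: "space (rgg_space n) - U \<subseteq> {x \<in> space (rgg_space n). \<not> rgg_plane n r x}"
  proof
    fix x assume x: "x \<in> space (rgg_space n) - U"
    then obtain i j k l where "i < n" "j < n" "k < n" "l < n" "x i \<in> BA" "x j \<in> BB" "x k \<in> BC" "x l \<in> BD"
      unfolding U_def E_def by blast
    then have "\<not> rgg_plane n r x" unfolding BA_def BB_def BC_def BD_def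
      by (intro hit_nonplane[OF h(1,3)])
    then show "x \<in> {x \<in> space (rgg_space n). \<not> rgg_plane n r x}" using x by simp
  qed
  have "1 - 4 * q \<le> 1 - measure (rgg_space n) U" using mU by simp
  also have "\<dots> = measure (rgg_space n) (space (rgg_space n) - U)" using sU by (simp add: P.prob_compl)
  also have "\<dots> \<le> measure (rgg_space n) {x \<in> space (rgg_space n). \<not> rgg_plane n r x}"
    by (intro P.finite_measure_mono sub nonplane_meas)
  finally show ?thesis unfolding q_def .
qed


lemma key_ineq:
  fixes r c :: real and n :: nat
  assumes c: "c \<ge> 36" and n: "n \<ge> 2" and r: "r \<ge> sqrt (c * ln (real n) / real n)"
  shows "1 - 4 * real n powr (-1/225) \<le> measure (rgg_space n) {x \<in> space (rgg_space n). \<not> rgg_plane n r x}"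
proof -
  have ln: "ln (real n) > 0" using n by simp
  have "0 < real n" using n by simp
  then have "ln (real n) < real n" by (rule ln_less_self)
  then have lnn: "ln (real n) \<le> real n" by simp
  have pos: "c * ln (real n) / real n > 0" using c ln n by simp
  then have "sqrt (c * ln (real n) / real n) > 0" by (rule real_sqrt_gt_zero)
  then have rpos: "r > 0" using r by linarith
  define h where "h = min r 1 / 3"
  have h: "0 < h" "h \<le> 1/3" "3*h \<le> r" unfolding h_def using rpos by auto
  note pb = prob_bound[OF h, of n]
  define x where "x = (h/5)^2"
  have x: "0 \<le> x" "x \<le> 1" unfolding x_def using h by (auto simp: power_le_one)
  have "(1 - x)^n \<le> exp (-x)^n" using x by (intro power_mono) (use exp_ge_add_one_self[of "-x"] in auto)
  also have "\<dots> = exp (- (x * real n))" by (simp add: exp_of_nat_mult[symmetric] mult.commute)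
  also have "\<dots> \<le> exp (- ln (real n) / 225)"
  proof -
    have r2: "r^2 \<ge> c * ln (real n) / real n"
    proof -
      have "sqrt (c * ln (real n) / real n) ^ 2 \<le> r^2" using r pos by (intro power_mono) auto
      then show ?thesis using pos by simp
    qed
    have "ln (real n) \<le> min r 1 ^ 2 * real n"
    proof (cases "r \<le> 1")
      case True
      then have "min r 1 ^ 2 * real n = r^2 * real n" by simp
      also have "\<dots> \<ge> c * ln (real n)" using r2 n by (simp add: field_simps)
      moreover have "c * ln (real n) \<ge> ln (real n)" using c ln by simp
      ultimately show ?thesis by linarith
    next
      case False
      then show ?thesis using lnn by simp
    qed
    then have "ln (real n) / 225 \<le> x * real n" unfolding x_def h_def by (simp add: power_divide field_simps)
    then show ?thesis by simp
  qed
  also have "exp (- ln (real n) / 225) = real n powr (-1/225)" using n by (simp add: powr_def)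
  finally have "(1 - x)^n \<le> real n powr (-1/225)" .
  then show ?thesis using pb unfolding x_def by linarith
qed

lemma lim_aux: "(\<lambda>n::nat. 1 - 4 * real n powr (-1/225)) \<longlonglongrightarrow> 1"
proof -
  have "(\<lambda>n::nat. real n powr (-1/225)) \<longlonglongrightarrow> 0"
    by (intro tendsto_neg_powr filterlim_real_sequentially) auto
  then have "(\<lambda>n::nat. 1 - 4 * real n powr (-1/225)) \<longlonglongrightarrow> 1 - 4 * 0"
    by (intro tendsto_intros)
  then show ?thesis by simp
qed

theorem theorem3:
  fixes r :: "nat \<Rightarrow> real" and c :: real
  assumes "c \<ge> 36"
    and "eventually (\<lambda>n. r n \<ge> sqrt (c * ln (real n) / real n)) at_top"
  shows "(\<lambda>n. measure (rgg_space n) {x \<in> space (rgg_space n). \<not> rgg_plane n (r n) x})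
           \<longlonglongrightarrow> 1"
proof (rule tendsto_sandwich[OF _ _ lim_aux tendsto_const])
  have "eventually (\<lambda>n::nat. n \<ge> 2) at_top" by (rule eventually_ge_at_top)
  with assms(2) show "eventually (\<lambda>n. 1 - 4 * real n powr (-1/225) \<le> measure (rgg_space n) {x \<in> space (rgg_space n). \<not> rgg_plane n (r n) x}) sequentially"
    by eventually_elim (rule key_ineq[OF assms(1)])
  show "eventually (\<lambda>n. measure (rgg_space n) {x \<in> space (rgg_space n). \<not> rgg_plane n (r n) x} \<le> 1) sequentially"
  proof (rule always_eventually, rule allI)
    fix n
    interpret P: prob_space "rgg_space n" by (rule rgg_prob)
    show "measure (rgg_space n) {x \<in> space (rgg_space n). \<not> rgg_plane n (r n) x} \<le> 1" by (rule P.prob_le_1)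
  qed
qed

end
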